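(* Let $\alpha\in[0,1)$ and let $n\geq f(\alpha)$ be an integer. Then $\theta(n)<\eta(n)$.
   Context: Define $f(\alpha)=14$ if $\alpha\in[0,\frac12]$, $f(\alpha)=17$ if $\alpha\in(\frac12,\frac23]$, $f(\alpha)=20$ if $\alpha\in(\frac23,\frac34]$, and $f(\alpha)=\frac{5}{1-\alpha}+1$ if $\alpha\in(\frac34,1)$. $\theta(n)$ is the largest root of $x^{3}-((\alpha+1)n+\alpha-5)x^{2}+(\alpha n^{2}+(\alpha^{2}-3\alpha-1)n-2\alpha+1)x-\alpha^{2}n^{2}+(7\alpha^{2}-5\alpha+3)n-18\alpha^{2}+29\alpha-15=0$, and $\eta(n)$ is the largest root of $x^{3}-((\alpha+1)n+\alpha-4)x^{2}+(\alpha n^{2}+(\alpha^{2}-2\alpha-1)n-2\alpha+1)x-\alpha^{2}n^{2}+(5\alpha^{2}-3\alpha+2)n-10\alpha^{2}+15\alpha-8=0$. *)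

theory Defs
  imports Complex_Main
begin

definition f_thr :: "real \<Rightarrow> real" where
  "f_thr \<alpha> = (if \<alpha> \<le> 1/2 then 14
              else if \<alpha> \<le> 2/3 then 17
              else if \<alpha> \<le> 3/4 then 20
              else 5 / (1 - \<alpha>) + 1)"

definition theta_poly :: "real \<Rightarrow> real \<Rightarrow> real \<Rightarrow> real" where
  "theta_poly \<alpha> n x =
     x^3 - ((\<alpha>+1)*n + \<alpha> - 5) * x^2
     + (\<alpha>*n^2 + (\<alpha>^2 - 3*\<alpha> - 1)*n - 2*\<alpha> + 1) * x
     - \<alpha>^2*n^2 + (7*\<alpha>^2 - 5*\<alpha> + 3)*n - 18*\<alpha>^2 + 29*\<alpha> - 15"

definition eta_poly :: "real \<Rightarrow> real \<Rightarrow> real \<Rightarrow> real" where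
  "eta_poly \<alpha> n x =
     x^3 - ((\<alpha>+1)*n + \<alpha> - 4) * x^2
     + (\<alpha>*n^2 + (\<alpha>^2 - 2*\<alpha> - 1)*n - 2*\<alpha> + 1) * x
     - \<alpha>^2*n^2 + (5*\<alpha>^2 - 3*\<alpha> + 2)*n - 10*\<alpha>^2 + 15*\<alpha> - 8"

text \<open>Largest real root (a real monic cubic always has a real root, and finitely many).\<close>
definition theta :: "real \<Rightarrow> nat \<Rightarrow> real" where
  "theta \<alpha> n = Max {x. theta_poly \<alpha> (real n) x = 0}"

definition eta :: "real \<Rightarrow> nat \<Rightarrow> real" where
  "eta \<alpha> n = Max {x. eta_poly \<alpha> (real n) x = 0}"

end

theory Submission
  imports Defs "HOL-Computational_Algebra.Polynomial"
begin

lemma cubic_pos: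
  fixes c2 c1 c0 x :: real
  assumes "x \<ge> 1 + \<bar>c2\<bar> + \<bar>c1\<bar> + \<bar>c0\<bar>"
  shows "x^3 + c2*x^2 + c1*x + c0 > 0"
proof -
  have x1: "x \<ge> 1" using assms by linarith
  have x2: "x^2 \<ge> x" using x1 by (simp add: power2_eq_square)
  have "x^3 = x^2 * x" by (simp add: power3_eq_cube power2_eq_square)
  also have "\<dots> \<ge> x^2 * (1 + \<bar>c2\<bar> + \<bar>c1\<bar> + \<bar>c0\<bar>)"
    using assms x1 by (intro mult_left_mono) auto
  finally have h: "x^3 \<ge> x^2 + \<bar>c2\<bar>*x^2 + \<bar>c1\<bar>*x^2 + \<bar>c0\<bar>*x^2"
    by (simp add: algebra_simps)
  have a1: "\<bar>c1\<bar>*x^2 \<ge> \<bar>c1\<bar>*x" using x2 by (intro mult_left_mono) auto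
  have xx: "x^2 \<ge> 1" using x1 x2 by linarith
  have a0: "\<bar>c0\<bar>*x^2 \<ge> \<bar>c0\<bar>*1" using xx by (intro mult_left_mono) auto
  have b2: "c2*x^2 \<ge> - (\<bar>c2\<bar>*x^2)" by (rule ccontr) (auto simp: abs_if mult_less_0_iff algebra_simps split: if_splits)
  have b1: "c1*x \<ge> - (\<bar>c1\<bar>*x)" using x1 by (auto simp: abs_if algebra_simps)
  have b0: "c0 \<ge> - \<bar>c0\<bar>" by auto
  have "x^2 \<ge> 1" using x1 x2 by linarith
  then show ?thesis using h a1 a0 b2 b1 b0 by linarith
qed

lemma largest_root:
  fixes c2 c1 c0 y :: real
  assumes "y^3 + c2*y^2 + c1*y + c0 < 0"
  shows "Max {x. x^3 + c2*x^2 + c1*x + c0 = 0} \<in> {x. x^3 + c2*x^2 + c1*x + c0 = 0}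
       \<and> y < Max {x. x^3 + c2*x^2 + c1*x + c0 = 0}"
proof -
  let ?h = "\<lambda>x::real. x^3 + c2*x^2 + c1*x + c0"
  let ?S = "{x. ?h x = 0}"
  define B where "B = 1 + \<bar>c2\<bar> + \<bar>c1\<bar> + \<bar>c0\<bar> + \<bar>y\<bar>"
  have hB: "?h B > 0" by (rule cubic_pos) (simp add: B_def)
  have yB: "y \<le> B" unfolding B_def by linarith
  have cont: "continuous_on {y..B} ?h" by (intro continuous_intros)
  obtain z where z: "z \<ge> y" "z \<le> B" "?h z = 0"
    using IVT'[of ?h y 0 B, OF _ _ yB cont] assms hB by auto
  have zy: "z > y" using z assms by (cases "z = y") auto
  have fin: "finite ?S"
  proof -
    have "?S = {x. poly [:c0, c1, c2, 1:] x = 0}"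
      by (auto simp: algebra_simps power2_eq_square power3_eq_cube)
    moreover have "[:c0, c1, c2, 1:] \<noteq> 0" by simp
    ultimately show ?thesis using poly_roots_finite by metis
  qed
  have zS: "z \<in> ?S" using z by simp
  have "Max ?S \<in> ?S" using fin zS by (intro Max_in) auto
  moreover have "z \<le> Max ?S" using fin zS by (intro Max_ge) auto
  ultimately show ?thesis using zy by auto
qed

theorem mainTheorem3:
  fixes \<alpha> :: real and n :: nat
  assumes "0 \<le> \<alpha>" and "\<alpha> < 1" and "real n \<ge> f_thr \<alpha>"
  shows "theta \<alpha> n < eta \<alpha> n"
proof -
  define a where "a = \<alpha>"
  define m where "m = real n"
  have a0: "0 \<le> a" and a1: "a < 1" using assms by (auto simp: a_def)
  have fm: "m \<ge> f_thr a" using assms(3) by (simp add: a_def m_def)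
  have K: "(1-a)*m \<ge> 7 - 2*a - 2*a^2 \<and> m \<ge> 8"
  proof (cases "a \<le> 1/2")
    case True
    then have "m \<ge> 14" using fm by (simp add: f_thr_def)
    then have "(1-a)*m \<ge> (1-a)*14" using a1 by (intro mult_left_mono) auto
    moreover have "a^2 \<ge> 0" by simp
    moreover have "(1-a)*14 = 14 - 14*a" by simp
    ultimately have "7 - 2*a - 2*a^2 \<le> (1-a)*m" using True a0 by linarith
    then show ?thesis using `m \<ge> 14` by simp
  next
    case c1: False
    show ?thesis
    proof (cases "a \<le> 2/3")
      case True
      then have "m \<ge> 17" using fm c1 by (simp add: f_thr_def)
      then have "(1-a)*m \<ge> (1-a)*17" using a1 by (intro mult_left_mono) auto
      moreover have "(1-a)*17 \<ge> 7 - 2*a - 2*a^2"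
      proof -
        have "a^2 \<ge> 0" by simp
        then show ?thesis using True by (simp add: algebra_simps; linarith)
      qed
      ultimately show ?thesis using `m \<ge> 17` by linarith
    next
      case c2: False
      show ?thesis
      proof (cases "a \<le> 3/4")
        case True
        then have "m \<ge> 20" using fm c1 c2 by (simp add: f_thr_def)
        then have "(1-a)*m \<ge> (1-a)*20" using a1 by (intro mult_left_mono) auto
        moreover have "(1-a)*20 \<ge> 7 - 2*a - 2*a^2"
        proof -
          have "a*a \<ge> (2/3)*a" using c2 a0 by (intro mult_right_mono) auto
          then have "a^2 \<ge> 4/9" using c2 unfolding power2_eq_square by linarith
          then show ?thesis using True by (simp add: algebra_simps; linarith)
        qed
        ultimately show ?thesis using `m \<ge> 20` by linarith
      next
        case False
        then have mm: "m \<ge> 5/(1-a) + 1" using fm c1 c2 by (simp add: f_thr_def)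
        have pos: "1 - a > 0" using a1 by simp
        have "(1-a)*m \<ge> (1-a)*(5/(1-a)+1)" using mm pos by (intro mult_left_mono) auto
        also have "(1-a)*(5/(1-a)+1) = 5 + (1-a)" using pos by (simp add: field_simps)
        finally have h: "(1-a)*m \<ge> 6 - a" by simp
        have "5/(1-a) \<ge> 20" using pos False by (simp add: field_simps)
        then have "m \<ge> 8" using mm by linarith
        moreover have "6 - a \<ge> 7 - 2*a - 2*a^2"
        proof -
          have "a*a \<ge> (3/4)*a" using False a0 by (intro mult_right_mono) auto
          then have "a^2 \<ge> 9/16" using False unfolding power2_eq_square by linarith
          then show ?thesis using False by (simp add: algebra_simps; linarith)
        qed
        ultimately show ?thesis using h by linarith
      qed
    qed
  qed
  define c2 where "c2 = -((a+1)*m + a - 5)"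
  define c1 where "c1 = a*m^2 + (a^2 - 3*a - 1)*m - 2*a + 1"
  define c0 where "c0 = -(a^2*m^2) + (7*a^2 - 5*a + 3)*m - 18*a^2 + 29*a - 15"
  define g where "g = (\<lambda>t. -(t^2) + a*m*t + (-(2*a^2)+2*a-1)*m + 8*a^2-14*a+7)"
  have tp: "theta_poly a m = (\<lambda>x. x^3 + c2*x^2 + c1*x + c0)"
    by (rule ext) (simp add: theta_poly_def c2_def c1_def c0_def algebra_simps)
  have ep: "eta_poly a m = (\<lambda>x. x^3 + (c2-1)*x^2 + (c1 + a*m)*x + (c0 + (-(2*a^2)+2*a-1)*m + 8*a^2-14*a+7))"
    by (rule ext) (simp add: eta_poly_def c2_def c1_def c0_def algebra_simps power2_eq_square)
  have th: "theta \<alpha> n = Max {x. x^3 + c2*x^2 + c1*x + c0 = 0}"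
    using tp by (simp add: theta_def a_def m_def)
  have et: "eta \<alpha> n = Max {x. x^3 + (c2-1)*x^2 + (c1 + a*m)*x + (c0 + (-(2*a^2)+2*a-1)*m + 8*a^2-14*a+7) = 0}"
    using ep by (simp add: eta_def a_def m_def)
  define y where "y = m - 4"
  have Py: "y^3 + c2*y^2 + c1*y + c0 = 3*(1-a)*(6*a - 1 - a*m)"
    by (simp add: y_def c2_def c1_def c0_def algebra_simps power2_eq_square power3_eq_cube)
  have "a*m \<ge> a*8" using K a0 by (intro mult_left_mono) auto
  then have "6*a - 1 - a*m < 0" using a0 by linarith
  then have "y^3 + c2*y^2 + c1*y + c0 < 0" unfolding Py using a1
    by (simp add: mult_pos_neg)
  from largest_root[OF this] have
    tS: "theta \<alpha> n ^3 + c2*theta \<alpha> n^2 + c1*theta \<alpha> n + c0 = 0" and ty: "y < theta \<alpha> n"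
    using th by auto
  define t where "t = theta \<alpha> n"
  have gy: "g y = -m*((1-a)*m - (7 - 2*a - 2*a^2)) + (8*a^2-14*a-9)"
    by (simp add: g_def y_def algebra_simps power2_eq_square)
  have "m*((1-a)*m - (7 - 2*a - 2*a^2)) \<ge> 0" using K by simp
  moreover have "8*a^2-14*a-9 < 0"
  proof -
    have "a*a \<le> 1*a" using a0 a1 by (intro mult_right_mono) auto
    then show ?thesis using a0 unfolding power2_eq_square by linarith
  qed
  ultimately have gyn: "g y < 0" using gy by linarith
  have "g t - g y = (t - y)*(a*m - t - y)" by (simp add: g_def algebra_simps power2_eq_square)
  moreover have "a*m \<le> 2*y"
  proof -
    have "a*m \<le> 1*m" using K a1 by (intro mult_right_mono) auto
    then have h: "a*m \<le> m" by simp
    have "2*y = 2*m - 8" unfolding y_def by simp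
    then show ?thesis using h K[THEN conjunct2] by linarith
  qed
  moreover have "t > y" using ty t_def by simp
  ultimately have "g t - g y \<le> 0" by (simp add: mult_nonneg_nonpos)
  then have gt: "g t < 0" using gyn by linarith
  have "t^3 + (c2-1)*t^2 + (c1 + a*m)*t + (c0 + (-(2*a^2)+2*a-1)*m + 8*a^2-14*a+7)
        = (t^3 + c2*t^2 + c1*t + c0) + g t"
    by (simp add: g_def algebra_simps)
  also have "\<dots> < 0" using tS gt t_def by simp
  finally have "t^3 + (c2-1)*t^2 + (c1 + a*m)*t + (c0 + (-(2*a^2)+2*a-1)*m + 8*a^2-14*a+7) < 0" .
  from largest_root[OF this] show ?thesis using et t_def by simp
qed

end
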